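(* For every $a\in\mathbb N^{\mathbb N}$ and $n\in\mathbb N$, $q_n(a)\le\#\Omega_{a,n}\le10\,q_n(a)$.
   Context: For $a=(a_n)\in\mathbb N^{\mathbb N}$, $q_n(a)$ are the continued fraction denominators: $q_{-1}=0$, $q_0=1$, $q_{n+1}=a_{n+1}q_n+q_{n-1}$. For $n\ge1$ let $\mathcal A_n=\{(\mathbf1,k)_n:1\le k\le n+1\}\cup\{(\mathbf2,1)_n\}\cup\{(\mathbf3,k)_n:1\le k\le n\}$, type $\mathbf t_{(\mathbf t,k)_n}=\mathbf t$. For $\mathbf t\in\{\mathbf1,\mathbf2,\mathbf3\}$, $\hat e\in\mathcal A_n$: $\mathbf t\to\hat e$ iff $(\mathbf t,\hat e)$ is $(\mathbf1,(\mathbf2,1)_n)$, $(\mathbf2,(\mathbf1,k)_n)$ with $k\le n+1$, $(\mathbf2,(\mathbf3,k)_n)$ with $k\le n$, $(\mathbf3,(\mathbf1,k)_n)$ with $k\le n$, or $(\mathbf3,(\mathbf3,k)_n)$ with $k\le n-1$; $e\to\hat e$ iff $\mathbf t_e\to\hat e$. $\Omega_{a,n}$ is the set of words $w_1\cdots w_n$ with $w_j\in\mathcal A_{a_j}$ and $w_j\to w_{j+1}$ for $1\le j<n$. *)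

theory Defs
  imports Main
begin

text \<open>Continued fraction denominators, with a indexed from 1:
  q 0 = 1, q 1 = a 1, q (n+2) = a (n+2) * q (n+1) + q n  (q_{-1} = 0).\<close>
fun cf_q :: "(nat \<Rightarrow> nat) \<Rightarrow> nat \<Rightarrow> nat" where
  "cf_q a 0 = 1"
| "cf_q a (Suc 0) = a 1"
| "cf_q a (Suc (Suc n)) = a (Suc (Suc n)) * cf_q a (Suc n) + cf_q a n"

datatype ltype = T1 | T2 | T3

text \<open>A letter (t,k)_n is represented as the triple (t, k, n).\<close>
type_synonym letter = "ltype \<times> nat \<times> nat"

definition alph :: "nat \<Rightarrow> letter set" where
  "alph n = {(T1, k, n) | k. 1 \<le> k \<and> k \<le> n + 1} \<union> {(T2, 1, n)}
          \<union> {(T3, k, n) | k. 1 \<le> k \<and> k \<le> n}"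

fun tarrow :: "ltype \<Rightarrow> letter \<Rightarrow> bool" where
  "tarrow T1 (t', k, n) = (t' = T2 \<and> k = 1)"
| "tarrow T2 (t', k, n) = ((t' = T1 \<and> k \<le> n + 1) \<or> (t' = T3 \<and> k \<le> n))"
| "tarrow T3 (t', k, n) = ((t' = T1 \<and> k \<le> n) \<or> (t' = T3 \<and> k + 1 \<le> n))"

definition larrow :: "letter \<Rightarrow> letter \<Rightarrow> bool" where
  "larrow e e' = tarrow (fst e) e'"

text \<open>Omega a n: words w_1...w_n (list index j-1 holds w_j) with w_j in alph (a j).\<close>
definition Omega :: "(nat \<Rightarrow> nat) \<Rightarrow> nat \<Rightarrow> letter list set" where
  "Omega a n = {w. length w = n \<and> (\<forall>j<n. w ! j \<in> alph (a (Suc j)))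
                 \<and> (\<forall>j. Suc j < n \<longrightarrow> larrow (w ! j) (w ! Suc j))}"

end

theory Submission
  imports Defs
begin

definition Ot :: "(nat \<Rightarrow> nat) \<Rightarrow> nat \<Rightarrow> ltype \<Rightarrow> letter list set" where
  "Ot a n t = {w\<in>Omega a n. fst (last w) = t}"

definition Lset :: "nat \<Rightarrow> ltype \<Rightarrow> ltype \<Rightarrow> letter set" where
  "Lset m t t' = {e\<in>alph m. fst e = t' \<and> tarrow t e}"

definition Aset :: "nat \<Rightarrow> ltype \<Rightarrow> letter set" where
  "Aset m t = {e\<in>alph m. fst e = t}"

lemma img_card: "card ((\<lambda>k. (t::ltype, k, m::nat)) ` {1..N}) = N"
  by (subst card_image) (auto simp: inj_on_def)

lemma L_T1: "Lset m T1 T1 = {}" "Lset m T1 T2 = {(T2,1,m)}" "Lset m T1 T3 = {}"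
  by (auto simp: Lset_def alph_def)
lemma L_T2: "Lset m T2 T1 = (\<lambda>k. (T1, k, m)) ` {1..m+1}" "Lset m T2 T2 = {}"
   "Lset m T2 T3 = (\<lambda>k. (T3, k, m)) ` {1..m}"
  by (auto simp: Lset_def alph_def)
lemma L_T3: "Lset m T3 T1 = (\<lambda>k. (T1, k, m)) ` {1..m}" "Lset m T3 T2 = {}"
   "Lset m T3 T3 = (\<lambda>k. (T3, k, m)) ` {1..m-1}"
  by (auto simp: Lset_def alph_def)
lemma A_all: "Aset m T1 = (\<lambda>k. (T1, k, m)) ` {1..m+1}" "Aset m T2 = {(T2,1,m)}"
   "Aset m T3 = (\<lambda>k. (T3, k, m)) ` {1..m}"
  by (auto simp: Aset_def alph_def)

lemma finite_alph: "finite (alph m)"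
proof -
  have "alph m \<subseteq> UNIV \<times> {0..m+1} \<times> {m}" by (auto simp: alph_def)
  moreover have "finite (UNIV \<times> {0..m+1} \<times> {m} :: letter set)"
  proof -
    have "(UNIV :: ltype set) = {T1,T2,T3}" using ltype.exhaust by blast
    then show ?thesis by (metis finite.emptyI finite.insertI finite_SigmaI finite_atLeastAtMost)
  qed
  ultimately show ?thesis by (rule finite_subset)
qed

lemma finite_Omega: "finite (Omega a n)"
proof -
  let ?A = "\<Union>j\<in>{..n}. alph (a j)"
  have "Omega a n \<subseteq> {w. set w \<subseteq> ?A \<and> length w = n}"
    by (auto simp: Omega_def in_set_conv_nth) (metis Suc_leI atMost_iff)
  moreover have "finite ?A" using finite_alph by auto
  ultimately show ?thesis using finite_lists_length_eq finite_subset by blast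
qed

lemma Omega_0: "Omega a 0 = {[]}" by (auto simp: Omega_def)

lemma Omega_Suc: "Omega a (Suc n) = (\<lambda>(w,e). w@[e]) `
   {(w,e). w \<in> Omega a n \<and> e \<in> alph (a (Suc n)) \<and> (n=0 \<or> larrow (last w) e)}"
proof
  show "Omega a (Suc n) \<subseteq> (\<lambda>(w,e). w@[e]) `
   {(w,e). w \<in> Omega a n \<and> e \<in> alph (a (Suc n)) \<and> (n=0 \<or> larrow (last w) e)}"
  proof
    fix v assume v: "v \<in> Omega a (Suc n)"
    then have len: "length v = Suc n" by (simp add: Omega_def)
    then have ne: "v \<noteq> []" by auto
    define w where "w = butlast v"
    define e where "e = last v"
    have ve: "v = w @ [e]" using ne by (simp add: w_def e_def)
    have lw: "length w = n" using len by (simp add: w_def)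
    have vA: "\<forall>j<Suc n. v ! j \<in> alph (a (Suc j))" and
       vB: "\<forall>j. Suc j < Suc n \<longrightarrow> larrow (v ! j) (v ! Suc j)" using v by (simp_all add: Omega_def)
    have wj: "w ! j = v ! j" if "j < n" for j using that lw ve by (simp add: nth_append)
    have "w \<in> Omega a n"
      unfolding Omega_def
    proof (intro CollectI conjI allI impI)
      show "length w = n" by (rule lw)
      fix j assume "j < n" then show "w ! j \<in> alph (a (Suc j))" using vA wj by simp
    next
      fix j assume "Suc j < n" then show "larrow (w ! j) (w ! Suc j)" using vB wj by simp
    qed
    moreover have "e \<in> alph (a (Suc n))" using vA lw ve
      by (metis lessI nth_append_length)
    moreover have "n = 0 \<or> larrow (last w) e"
    proof (cases n)
      case (Suc k)
      have "larrow (v ! k) (v ! Suc k)" using v Suc by (auto simp: Omega_def)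
      moreover have "v ! k = last w" using lw Suc ve
        by (simp add: nth_append last_conv_nth del: length_0_conv) (metis Zero_not_Suc diff_Suc_1 last_conv_nth list.size(3))
      moreover have "v ! Suc k = e" using lw Suc ve by (metis nth_append_length)
      ultimately show ?thesis by simp
    qed simp
    ultimately show "v \<in> (\<lambda>(w,e). w@[e]) `
   {(w,e). w \<in> Omega a n \<and> e \<in> alph (a (Suc n)) \<and> (n=0 \<or> larrow (last w) e)}"
      using ve by auto
  qed
next
  show "(\<lambda>(w,e). w@[e]) `
   {(w,e). w \<in> Omega a n \<and> e \<in> alph (a (Suc n)) \<and> (n=0 \<or> larrow (last w) e)} \<subseteq> Omega a (Suc n)"
  proof clarify
    fix w e assume w: "w \<in> Omega a n" and e: "e \<in> alph (a (Suc n))"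
      and h: "n = 0 \<or> larrow (last w) e"
    have lw: "length w = n" using w by (simp add: Omega_def)
    have A: "\<forall>j<Suc n. (w@[e]) ! j \<in> alph (a (Suc j))"
    proof (intro allI impI)
      fix j assume "j < Suc n"
      then show "(w@[e]) ! j \<in> alph (a (Suc j))"
      proof (cases "j < n")
        case True then show ?thesis using w lw by (simp add: Omega_def nth_append)
      next
        case False then have "j = n" using \<open>j < Suc n\<close> by simp
        then show ?thesis using e lw by (metis nth_append_length)
      qed
    qed
    have B: "\<forall>j. Suc j < Suc n \<longrightarrow> larrow ((w@[e]) ! j) ((w@[e]) ! Suc j)"
    proof (intro allI impI)
      fix j assume j: "Suc j < Suc n"
      show "larrow ((w@[e]) ! j) ((w@[e]) ! Suc j)"
      proof (cases "Suc j < n")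
        case True then show ?thesis using w lw j by (auto simp: Omega_def nth_append)
      next
        case False
        then have "Suc j = n" using j by simp
        moreover have "last w = w ! j" using lw \<open>Suc j = n\<close>
          by (metis diff_Suc_1 last_conv_nth list.size(3) nat.distinct(1))
        ultimately show ?thesis using h lw by (simp add: nth_append)
      qed
    qed
    show "w @ [e] \<in> Omega a (Suc n)" using A B lw by (simp add: Omega_def)
  qed
qed

lemma inj_snoc: "inj_on (\<lambda>(w,e). w@[e]) X"
  by (auto simp: inj_on_def)

lemma Ot_Suc: assumes "n \<ge> 1"
  shows "Ot a (Suc n) t' = (\<lambda>(w,e). w@[e]) ` (SIGMA w:Omega a n. Lset (a (Suc n)) (fst (last w)) t')"
  using assms by (auto simp: Ot_def Omega_Suc Lset_def larrow_def)

lemma Ot_1: "Ot a 1 t = (\<lambda>e. [e]) ` Aset (a 1) t"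
  by (auto simp: Ot_def Omega_Suc Omega_0 Aset_def image_iff)

lemma card_Ot_1: "card (Ot a 1 t) = card (Aset (a 1) t)"
  unfolding Ot_1 by (rule card_image) (auto simp: inj_on_def)

lemma card_Ot_Suc: assumes "n \<ge> 1"
  shows "card (Ot a (Suc n) t') = (\<Sum>t\<in>{T1,T2,T3}. card (Ot a n t) * card (Lset (a (Suc n)) t t'))"
proof -
  have fL: "finite (Lset m t t')" for m t t' using finite_alph by (simp add: Lset_def)
  have "card (Ot a (Suc n) t') = card (SIGMA w:Omega a n. Lset (a (Suc n)) (fst (last w)) t')"
    unfolding Ot_Suc[OF assms] by (rule card_image) (rule inj_snoc)
  also have "\<dots> = (\<Sum>w\<in>Omega a n. card (Lset (a (Suc n)) (fst (last w)) t'))"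
    using finite_Omega fL by (simp add: card_SigmaI)
  also have "\<dots> = (\<Sum>t\<in>{T1,T2,T3}. \<Sum>w\<in>{w\<in>Omega a n. fst (last w) = t}. card (Lset (a (Suc n)) (fst (last w)) t'))"
  proof (rule sum.group[symmetric])
    show "finite (Omega a n)" by (rule finite_Omega)
    show "finite {T1,T2,T3}" by simp
    show "(\<lambda>w. fst (last w)) ` Omega a n \<subseteq> {T1,T2,T3}" using ltype.exhaust by blast
  qed
  also have "\<dots> = (\<Sum>t\<in>{T1,T2,T3}. card (Ot a n t) * card (Lset (a (Suc n)) t t'))"
  proof (rule sum.cong[OF refl])
    fix t assume "t \<in> {T1,T2,T3}"
    have "(\<Sum>w\<in>{w\<in>Omega a n. fst (last w) = t}. card (Lset (a (Suc n)) (fst (last w)) t'))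
      = (\<Sum>w\<in>Ot a n t. card (Lset (a (Suc n)) t t'))"
      unfolding Ot_def by (rule sum.cong) auto
    then show "(\<Sum>w\<in>{w\<in>Omega a n. fst (last w) = t}. card (Lset (a (Suc n)) (fst (last w)) t'))
      = card (Ot a n t) * card (Lset (a (Suc n)) t t')" by simp
  qed
  finally show ?thesis .
qed

lemma card_Omega_pos: assumes "n \<ge> 1"
  shows "card (Omega a n) = card (Ot a n T1) + card (Ot a n T2) + card (Ot a n T3)"
proof -
  have "card (Omega a n) = (\<Sum>w\<in>Omega a n. 1)" by simp
  also have "\<dots> = (\<Sum>t\<in>{T1,T2,T3}. \<Sum>w\<in>{w\<in>Omega a n. fst (last w) = t}. 1)"
  proof (rule sum.group[symmetric])
    show "finite (Omega a n)" by (rule finite_Omega)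
    show "finite {T1,T2,T3}" by simp
    show "(\<lambda>w. fst (last w)) ` Omega a n \<subseteq> {T1,T2,T3}" using ltype.exhaust by blast
  qed
  also have "\<dots> = card (Ot a n T1) + card (Ot a n T2) + card (Ot a n T3)"
    by (simp add: Ot_def)
  finally show ?thesis .
qed


lemma card_L:
  "card (Lset m T1 T1) = 0" "card (Lset m T1 T2) = 1" "card (Lset m T1 T3) = 0"
  "card (Lset m T2 T1) = m+1" "card (Lset m T2 T2) = 0" "card (Lset m T2 T3) = m"
  "card (Lset m T3 T1) = m" "card (Lset m T3 T2) = 0" "card (Lset m T3 T3) = m - 1"
  by (simp_all only: L_T1 L_T2 L_T3 img_card) simp_all

lemma card_A:
  "card (Aset m T1) = m+1" "card (Aset m T2) = 1" "card (Aset m T3) = m"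
  by (simp_all only: A_all img_card) simp_all

lemma step_eqs: assumes "n \<ge> 1"
  shows "card (Ot a (Suc n) T1) = card (Ot a n T2) * (a (Suc n) + 1) + card (Ot a n T3) * a (Suc n)"
    "card (Ot a (Suc n) T2) = card (Ot a n T1)"
    "card (Ot a (Suc n) T3) = card (Ot a n T2) * a (Suc n) + card (Ot a n T3) * (a (Suc n) - 1)"
  using assms by (simp_all add: card_Ot_Suc card_L)

lemma arith_core:
  fixes P Q R x y z q0 q1 :: nat
  assumes "P + y = Q + (y + z)" "x + Q = (x - z) + P" "R \<le> P" "P \<le> 2 * R"
    "q1 \<le> x" "x \<le> 2*q1" "q1 \<le> y + z" "y + z \<le> 2*q1" "q0 \<le> y" "y \<le> 2*q0"
    "z \<le> x" "q0 \<le> x - z" "x - z \<le> 2*q0"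
  shows "R + q0 \<le> P + y \<and> P + y \<le> 2 * (R + q0) \<and> R + q0 \<le> x + Q \<and>
     x + Q \<le> 2 * (R + q0) \<and> q1 \<le> x \<and> x \<le> 2 * q1 \<and> Q \<le> P + y \<and>
     q1 \<le> P + y - Q \<and> P + y - Q \<le> 2 * q1"
proof -
  obtain d where d: "x = z + d" using assms(11) le_Suc_ex by blast
  show ?thesis using assms unfolding d by simp
qed

lemma invariant:
  assumes pos: "\<forall>j\<ge>1. a j \<ge> 1"
  shows "cf_q a (Suc n) \<le> card (Ot a (Suc n) T1) \<and> card (Ot a (Suc n) T1) \<le> 2 * cf_q a (Suc n)
    \<and> cf_q a (Suc n) \<le> card (Ot a (Suc n) T2) + card (Ot a (Suc n) T3)
    \<and> card (Ot a (Suc n) T2) + card (Ot a (Suc n) T3) \<le> 2 * cf_q a (Suc n)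
    \<and> cf_q a n \<le> card (Ot a (Suc n) T2) \<and> card (Ot a (Suc n) T2) \<le> 2 * cf_q a n
    \<and> card (Ot a (Suc n) T3) \<le> card (Ot a (Suc n) T1)
    \<and> cf_q a n \<le> card (Ot a (Suc n) T1) - card (Ot a (Suc n) T3)
    \<and> card (Ot a (Suc n) T1) - card (Ot a (Suc n) T3) \<le> 2 * cf_q a n"
proof (induction n)
  case 0
  have "a 1 \<ge> 1" using pos by simp
  have "card (Ot a (Suc 0) t) = card (Aset (a (Suc 0)) t)" for t using card_Ot_1[of a t] by simp
  then show ?case using \<open>a 1 \<ge> 1\<close> by (simp add: card_A)
next
  case (Suc n)
  define x where "x = card (Ot a (Suc n) T1)"
  define y where "y = card (Ot a (Suc n) T2)"
  define z where "z = card (Ot a (Suc n) T3)"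
  define m where "m = a (Suc (Suc n))"
  define q1 where "q1 = cf_q a (Suc n)"
  define q0 where "q0 = cf_q a n"
  have m1: "m \<ge> 1" using pos by (simp add: m_def)
  then obtain k where mk: "m = Suc k" by (cases m) auto
  have IH: "q1 \<le> x" "x \<le> 2*q1" "q1 \<le> y + z" "y + z \<le> 2*q1" "q0 \<le> y" "y \<le> 2*q0"
    "z \<le> x" "q0 \<le> x - z" "x - z \<le> 2*q0"
    using Suc.IH by (simp_all add: x_def y_def z_def q1_def q0_def)
  have q2: "cf_q a (Suc (Suc n)) = m * q1 + q0" by (simp add: m_def q1_def q0_def)
  have e1: "card (Ot a (Suc (Suc n)) T1) = m * (y + z) + y"
    using step_eqs(1)[of "Suc n" a] by (simp add: x_def y_def z_def m_def[symmetric] mk algebra_simps)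
  have e2: "card (Ot a (Suc (Suc n)) T2) = x"
    using step_eqs(2)[of "Suc n" a] by (simp add: x_def)
  have e3: "card (Ot a (Suc (Suc n)) T3) = y * m + z * k"
    using step_eqs(3)[of "Suc n" a] by (simp add: y_def z_def m_def[symmetric] mk)
  have d: "m * (y + z) + y = (y * m + z * k) + (y + z)" by (simp add: mk algebra_simps)
  have s: "x + (y * m + z * k) = (x - z) + m * (y + z)" using IH(7) by (simp add: mk algebra_simps)
  have p1: "m * q1 \<le> m * (y + z)" using IH(3) by simp
  have p2: "m * (y + z) \<le> 2 * (m * q1)" using IH(4) mult_le_mono2[OF IH(4), of m] by simp
  show ?case unfolding e1 e2 e3 q2 q1_def[symmetric] q0_def[symmetric]
    using d s p1 p2 IH by (rule arith_core)
qed

theorem lemma4p3: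
  fixes a :: "nat \<Rightarrow> nat" and n :: nat
  assumes "\<forall>j\<ge>1. a j \<ge> 1"
  shows "cf_q a n \<le> card (Omega a n) \<and> card (Omega a n) \<le> 10 * cf_q a n"
proof (cases n)
  case 0
  then show ?thesis by (simp add: Omega_0)
next
  case (Suc k)
  have c: "card (Omega a n) = card (Ot a n T1) + card (Ot a n T2) + card (Ot a n T3)"
    using Suc card_Omega_pos by simp
  show ?thesis using invariant[OF assms, of k] c unfolding Suc by (intro conjI) linarith+
qed

end
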